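(* Let $X$ be a random covariate vector with values in $\mathcal{X}$, $r\colon\mathcal{X}\to\{0,1\}$ a deterministic map, $A\in\{0,1\}$ and $S^\ast\in\{0,1\}$ random variables, and $Y^{a=0},Y^{a=1}$ integrable real-valued potential outcomes. Define $$A^\ast=S^\ast r(X)+(1-S^\ast)A,\quad Y^\ast=A^\ast Y^{a=1}+(1-A^\ast)Y^{a=0},$$ $$Y^{s=0}=AY^{a=1}+(1-A)Y^{a=0},\quad Y^{s=1}=r(X)Y^{a=1}+\{1-r(X)\}Y^{a=0}.$$ Assume $\{Y^{a=1},Y^{a=0}\}\perp\!\!\!\perp A\mid X$, $\{Y^{a=1},Y^{a=0}\}\perp\!\!\!\perp A^\ast\mid X$, $A\perp\!\!\!\perp S^\ast\mid X$, and $0<\pi(x)<1$, $0<\pi^\ast(x)<1$ for all $x\in\mathcal{X}$, where $\pi(x)=\mathbb{E}[A\mid X=x]$, $\pi^\ast(x)=\mathbb{E}[A^\ast\mid X=x]$. Let $\rho^\ast(x)=\mathbb{E}[S^\ast\mid X=x]$ and $\tau(x)=\mathbb{E}[Y^{a=1}-Y^{a=0}\mid X=x]$. Then the average implementation effect $\Lambda(r,\rho^\ast)=\mathbb{E}[Y^\ast-Y^{s=0}]$ and the maximal implementation gain $\Gamma(r,\rho^\ast)=\mathbb{E}[Y^{s=1}-Y^\ast]$ satisfy $$\Lambda(r,\rho^\ast)=\mathbb{E}\big[\{\pi^\ast(X)-\pi(X)\}\tau(X)\big]=\mathbb{E}\big[\rho^\ast(X)\{r(X)-\pi(X)\}\tau(X)\big],$$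 $$\Gamma(r,\rho^\ast)=\mathbb{E}\big[\{r(X)-\pi^\ast(X)\}\tau(X)\big]=\mathbb{E}\big[\{1-\rho^\ast(X)\}\{r(X)-\pi(X)\}\tau(X)\big].$$
   Context: This is the "new ITR" setting: $A$ is the treatment under usual care without the rule; $S^\ast$ indicates a (future) stochastic implementation of the rule $r$ with implementation function $\rho^\ast$; $A^\ast$ and $Y^\ast$ are the treatment and outcome under that partial implementation; $Y^{s=1}$ is the outcome if the rule were always followed and $Y^{s=0}$ the outcome under usual care. *)

theory Defs
  imports "HOL-Probability.Probability"
begin

definition sigma_of :: "'a measure \<Rightarrow> ('a \<Rightarrow> 'x) \<Rightarrow> 'x measure \<Rightarrow> 'a measure" where
  "sigma_of M X MX = vimage_algebra (space M) X MX"

text \<open>g is a version of the regression function x \<mapsto> E[f | X = x], i.e.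
  g is measurable on the covariate space and g(X) = E[f | sigma(X)] almost surely.\<close>
definition cond_exp_fun ::
  "'a measure \<Rightarrow> ('a \<Rightarrow> 'x) \<Rightarrow> 'x measure \<Rightarrow> ('a \<Rightarrow> real) \<Rightarrow> ('x \<Rightarrow> real) \<Rightarrow> bool" where
  "cond_exp_fun M X MX f g \<longleftrightarrow>
     g \<in> borel_measurable MX \<and>
     (AE \<omega> in M. g (X \<omega>) = real_cond_exp M (sigma_of M X MX) f \<omega>)"

definition cond_indep ::
  "'a measure \<Rightarrow> ('a \<Rightarrow> 'x) \<Rightarrow> 'x measure \<Rightarrow> 'u measure \<Rightarrow> ('a \<Rightarrow> 'u)
     \<Rightarrow> 'v measure \<Rightarrow> ('a \<Rightarrow> 'v) \<Rightarrow> bool" where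
  "cond_indep M X MX MU U MV V \<longleftrightarrow>
     (\<forall>B\<in>sets MU. \<forall>C\<in>sets MV.
        AE \<omega> in M.
          real_cond_exp M (sigma_of M X MX)
             (\<lambda>\<omega>. indicator B (U \<omega>) * indicator C (V \<omega>)) \<omega> =
          real_cond_exp M (sigma_of M X MX) (\<lambda>\<omega>. indicator B (U \<omega>)) \<omega> *
          real_cond_exp M (sigma_of M X MX) (\<lambda>\<omega>. indicator C (V \<omega>)) \<omega>)"

end

theory Submission
  imports Defs
begin

lemma sfs:
  assumes "prob_space M" "X \<in> measurable M MX"
  shows "sigma_finite_subalgebra M (sigma_of M X MX)"
proof -
  interpret prob_space M by fact
  have "subalgebra M (sigma_of M X MX)" unfolding subalgebra_def sigma_of_def
    using measurable_sets[OF assms(2)] measurable_space[OF assms(2)]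
    by (auto simp: sets_vimage_algebra2)
  then have "finite_measure_subalgebra M (sigma_of M X MX)" by unfold_locales
  then show ?thesis by (rule finite_measure_subalgebra_is_sigma_finite)
qed

lemma meas_F:
  assumes "X \<in> measurable M MX" "f \<in> borel_measurable MX"
  shows "(\<lambda>\<omega>. f (X \<omega>)) \<in> borel_measurable (sigma_of M X MX)"
  unfolding sigma_of_def
  using measurable_comp[OF measurable_vimage_algebra1 assms(2), of X "space M"]
    measurable_space[OF assms(1)] by (auto simp: o_def)

lemma key1:
  fixes U :: "'a \<Rightarrow> real \<times> real" and Z :: "'a \<Rightarrow> real"
  assumes P: "prob_space M" and Xm: "X \<in> measurable M MX" and Um: "U \<in> borel_measurable M"
   and Zm: "Z \<in> borel_measurable M" and Zb: "\<And>\<omega>. \<omega> \<in> space M \<Longrightarrow> Z \<omega> \<in> {0,1}"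
   and CI: "cond_indep M X MX borel U borel Z" and q: "cond_exp_fun M X MX Z q"
   and qb: "\<And>x. x \<in> space MX \<Longrightarrow> 0 \<le> q x \<and> q x \<le> 1"
   and B: "B \<in> sets borel"
  shows "(\<integral>\<omega>. Z \<omega> * indicator B (U \<omega>) \<partial>M) = (\<integral>\<omega>. q (X \<omega>) * indicator B (U \<omega>) \<partial>M)"
proof -
  interpret prob_space M by fact
  let ?F = "sigma_of M X MX"
  interpret sigma_finite_subalgebra M ?F using sfs[OF P Xm] .
  have qmX: "q \<in> borel_measurable MX" using q unfolding cond_exp_fun_def by auto
  have qm: "(\<lambda>\<omega>. q (X \<omega>)) \<in> borel_measurable ?F" by (rule meas_F[OF Xm qmX])
  have qmM: "(\<lambda>\<omega>. q (X \<omega>)) \<in> borel_measurable M" using qmX Xm by measurable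
  have ae1: "AE \<omega> in M. real_cond_exp M ?F (\<lambda>\<omega>. indicator B (U \<omega>) * indicator {1::real} (Z \<omega>)) \<omega> =
      real_cond_exp M ?F (\<lambda>\<omega>. indicator B (U \<omega>)) \<omega> * real_cond_exp M ?F (\<lambda>\<omega>. indicator {1::real} (Z \<omega>)) \<omega>"
    using CI B unfolding cond_indep_def by auto
  have ae2: "AE \<omega> in M. real_cond_exp M ?F (\<lambda>\<omega>. indicator {1::real} (Z \<omega>)) \<omega> = real_cond_exp M ?F Z \<omega>"
    by (rule real_cond_exp_cong) (use Zb Zm in \<open>auto split: split_indicator\<close>)
  have ae3: "AE \<omega> in M. q (X \<omega>) = real_cond_exp M ?F Z \<omega>" using q unfolding cond_exp_fun_def by auto
  have i1: "integrable M (\<lambda>\<omega>. indicator B (U \<omega>) * indicator {1::real} (Z \<omega>) :: real)"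
    by (rule integrable_const_bound[where B=1]) (use Um Zm B in \<open>auto split: split_indicator\<close>)
  have i2: "integrable M (\<lambda>\<omega>. q (X \<omega>) * indicator B (U \<omega>) :: real)"
    by (rule integrable_const_bound[where B=1])
       (use Um qmM B qb measurable_space[OF Xm] in \<open>auto split: split_indicator\<close>)
  have "(\<integral>\<omega>. Z \<omega> * indicator B (U \<omega>) \<partial>M) = (\<integral>\<omega>. indicator B (U \<omega>) * indicator {1::real} (Z \<omega>) \<partial>M)"
    by (rule Bochner_Integration.integral_cong[OF refl]) (use Zb in \<open>auto split: split_indicator\<close>)
  also have "\<dots> = (\<integral>\<omega>. real_cond_exp M ?F (\<lambda>\<omega>. indicator B (U \<omega>) * indicator {1::real} (Z \<omega>)) \<omega> \<partial>M)"
    using real_cond_exp_int(2)[OF i1] by simp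
  also have "\<dots> = (\<integral>\<omega>. q (X \<omega>) * real_cond_exp M ?F (\<lambda>\<omega>. indicator B (U \<omega>)) \<omega> \<partial>M)"
    by (rule integral_cong_AE) (use ae1 ae2 ae3 qmM in auto)
  also have "\<dots> = (\<integral>\<omega>. q (X \<omega>) * indicator B (U \<omega>) \<partial>M)"
    by (rule real_cond_exp_intg(2)[OF i2 qm]) (use Um B in auto)
  finally show ?thesis .
qed

lemma key2:
  fixes U :: "'a \<Rightarrow> real \<times> real" and Z :: "'a \<Rightarrow> real" and h :: "real \<times> real \<Rightarrow> real"
  assumes P: "prob_space M" and Xm: "X \<in> measurable M MX" and Um: "U \<in> borel_measurable M"
   and Zm: "Z \<in> borel_measurable M" and Zb: "\<And>\<omega>. \<omega> \<in> space M \<Longrightarrow> Z \<omega> \<in> {0,1}"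
   and CI: "cond_indep M X MX borel U borel Z" and q: "cond_exp_fun M X MX Z q"
   and qb: "\<And>x. x \<in> space MX \<Longrightarrow> 0 \<le> q x \<and> q x \<le> 1"
   and hm: "h \<in> borel_measurable borel"
  shows "(\<integral>\<omega>. Z \<omega> * h (U \<omega>) \<partial>M) = (\<integral>\<omega>. q (X \<omega>) * h (U \<omega>) \<partial>M)"
proof -
  interpret prob_space M by fact
  have qmX: "q \<in> borel_measurable MX" using q unfolding cond_exp_fun_def by auto
  have qmM: "(\<lambda>\<omega>. q (X \<omega>)) \<in> borel_measurable M" using qmX Xm by measurable
  have Zpos: "AE \<omega> in M. 0 \<le> Z \<omega>" using Zb by (auto intro!: AE_I2) (metis insertE singletonD order_refl zero_le_one)
  have qpos: "AE \<omega> in M. 0 \<le> q (X \<omega>)" using qb measurable_space[OF Xm] by (auto intro!: AE_I2)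
  let ?N1 = "distr (density M (\<lambda>\<omega>. ennreal (Z \<omega>))) borel U"
  let ?N2 = "distr (density M (\<lambda>\<omega>. ennreal (q (X \<omega>)))) borel U"
  have eq: "?N1 = ?N2"
  proof (rule measure_eqI)
    show "sets ?N1 = sets ?N2" by simp
    fix B assume "B \<in> sets ?N1"
    then have B: "B \<in> sets borel" by simp
    have pre: "U -` B \<inter> space M \<in> sets M" using Um B by measurable
    have iZ: "integrable M (\<lambda>\<omega>. Z \<omega> * indicator B (U \<omega>) :: real)"
      by (rule integrable_const_bound[where B=1]) (use Um Zm B in \<open>auto split: split_indicator intro!: AE_I2 dest: Zb\<close>)
    have iq: "integrable M (\<lambda>\<omega>. q (X \<omega>) * indicator B (U \<omega>) :: real)"
      by (rule integrable_const_bound[where B=1])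
         (use Um qmM B qb measurable_space[OF Xm] in \<open>auto split: split_indicator\<close>)
    have "emeasure ?N1 B = emeasure (density M (\<lambda>\<omega>. ennreal (Z \<omega>))) (U -` B \<inter> space M)"
      using Um B by (simp add: emeasure_distr)
    also have "\<dots> = (\<integral>\<^sup>+\<omega>. ennreal (Z \<omega>) * indicator (U -` B \<inter> space M) \<omega> \<partial>M)"
      using Zm pre by (simp add: emeasure_density)
    also have "\<dots> = (\<integral>\<^sup>+\<omega>. ennreal (Z \<omega> * indicator B (U \<omega>)) \<partial>M)"
      by (rule nn_integral_cong) (auto split: split_indicator)
    also have "\<dots> = ennreal (\<integral>\<omega>. Z \<omega> * indicator B (U \<omega>) \<partial>M)"
      by (rule nn_integral_eq_integral[OF iZ]) (use Zpos in \<open>auto split: split_indicator\<close>)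
    also have "\<dots> = ennreal (\<integral>\<omega>. q (X \<omega>) * indicator B (U \<omega>) \<partial>M)"
      using key1[OF P Xm Um Zm Zb CI q qb B] by simp
    also have "\<dots> = (\<integral>\<^sup>+\<omega>. ennreal (q (X \<omega>) * indicator B (U \<omega>)) \<partial>M)"
      by (rule nn_integral_eq_integral[OF iq, symmetric]) (use qpos in \<open>auto split: split_indicator\<close>)
    also have "\<dots> = (\<integral>\<^sup>+\<omega>. ennreal (q (X \<omega>)) * indicator (U -` B \<inter> space M) \<omega> \<partial>M)"
      by (rule nn_integral_cong) (auto split: split_indicator)
    also have "\<dots> = emeasure (density M (\<lambda>\<omega>. ennreal (q (X \<omega>)))) (U -` B \<inter> space M)"
      using qmM pre by (simp add: emeasure_density)
    also have "\<dots> = emeasure ?N2 B"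
      using Um B by (simp add: emeasure_distr)
    finally show "emeasure ?N1 B = emeasure ?N2 B" .
  qed
  have "(\<integral>\<omega>. Z \<omega> * h (U \<omega>) \<partial>M) = integral\<^sup>L ?N1 h"
    using integral_distr[of U "density M (\<lambda>\<omega>. ennreal (Z \<omega>))" borel h] integral_density[of "\<lambda>\<omega>. h (U \<omega>)" M Z]
      Um hm Zm Zpos by simp
  also have "\<dots> = integral\<^sup>L ?N2 h" using eq by simp
  also have "\<dots> = (\<integral>\<omega>. q (X \<omega>) * h (U \<omega>) \<partial>M)"
    using integral_distr[of U "density M (\<lambda>\<omega>. ennreal (q (X \<omega>)))" borel h] integral_density[of "\<lambda>\<omega>. h (U \<omega>)" M "\<lambda>\<omega>. q (X \<omega>)"]
      Um hm qmM qpos by simp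
  finally show ?thesis .
qed

lemma intb:
  fixes f g :: "'a \<Rightarrow> real"
  assumes "integrable M g" "f \<in> borel_measurable M" "AE \<omega> in M. \<bar>f \<omega>\<bar> \<le> 1"
  shows "integrable M (\<lambda>\<omega>. f \<omega> * g \<omega>)"
proof (rule Bochner_Integration.integrable_bound[OF assms(1)])
  show "(\<lambda>\<omega>. f \<omega> * g \<omega>) \<in> borel_measurable M"
    using assms(1,2) by (simp add: borel_measurable_integrable)
  show "AE \<omega> in M. norm (f \<omega> * g \<omega>) \<le> norm (g \<omega>)"
    using assms(3) by eventually_elim (simp add: abs_mult mult_left_le_one_le)
qed

lemma int01:
  fixes f :: "'a \<Rightarrow> real"
  assumes "prob_space M" "f \<in> borel_measurable M" "\<And>\<omega>. \<omega> \<in> space M \<Longrightarrow> f \<omega> \<in> {0,1}"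
  shows "integrable M f"
proof -
  interpret prob_space M by fact
  show ?thesis
    by (rule integrable_const_bound[where B=1]) (use assms(2) in \<open>auto intro!: AE_I2 dest: assms(3)\<close>)
qed

lemma key4:
  fixes Y1 Y0 :: "'a \<Rightarrow> real"
  assumes P: "prob_space M" and Xm: "X \<in> measurable M MX"
   and Y1: "integrable M Y1" and Y0: "integrable M Y0"
   and tau: "cond_exp_fun M X MX (\<lambda>\<omega>. Y1 \<omega> - Y0 \<omega>) \<tau>"
   and qm: "q \<in> borel_measurable MX"
   and qb: "\<And>x. x \<in> space MX \<Longrightarrow> \<bar>q x\<bar> \<le> 1"
  shows "(\<integral>\<omega>. q (X \<omega>) * (Y1 \<omega> - Y0 \<omega>) \<partial>M) = (\<integral>\<omega>. q (X \<omega>) * \<tau> (X \<omega>) \<partial>M)"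
    and "integrable M (\<lambda>\<omega>. q (X \<omega>) * \<tau> (X \<omega>))"
    and "integrable M (\<lambda>\<omega>. q (X \<omega>) * (Y1 \<omega> - Y0 \<omega>))"
proof -
  interpret prob_space M by fact
  let ?F = "sigma_of M X MX"
  interpret sigma_finite_subalgebra M ?F using sfs[OF P Xm] .
  have qF: "(\<lambda>\<omega>. q (X \<omega>)) \<in> borel_measurable ?F" by (rule meas_F[OF Xm qm])
  have qM: "(\<lambda>\<omega>. q (X \<omega>)) \<in> borel_measurable M" using qm Xm by measurable
  have qB: "AE \<omega> in M. \<bar>q (X \<omega>)\<bar> \<le> 1" using qb measurable_space[OF Xm] by (auto intro!: AE_I2)
  have iD: "integrable M (\<lambda>\<omega>. Y1 \<omega> - Y0 \<omega>)" using Y1 Y0 by simp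
  have tm: "\<tau> \<in> borel_measurable MX" and ae: "AE \<omega> in M. \<tau> (X \<omega>) = real_cond_exp M ?F (\<lambda>\<omega>. Y1 \<omega> - Y0 \<omega>) \<omega>"
    using tau unfolding cond_exp_fun_def by auto
  have tM: "(\<lambda>\<omega>. \<tau> (X \<omega>)) \<in> borel_measurable M" using tm Xm by measurable
  have it: "integrable M (\<lambda>\<omega>. \<tau> (X \<omega>))"
    by (rule integrable_cong_AE_imp[OF real_cond_exp_int(1)[OF iD] tM]) (use ae in \<open>eventually_elim, simp\<close>)
  show i1: "integrable M (\<lambda>\<omega>. q (X \<omega>) * (Y1 \<omega> - Y0 \<omega>))" by (rule intb[OF iD qM qB])
  show "integrable M (\<lambda>\<omega>. q (X \<omega>) * \<tau> (X \<omega>))" by (rule intb[OF it qM qB])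
  have "(\<integral>\<omega>. q (X \<omega>) * (Y1 \<omega> - Y0 \<omega>) \<partial>M) =
      (\<integral>\<omega>. q (X \<omega>) * real_cond_exp M ?F (\<lambda>\<omega>. Y1 \<omega> - Y0 \<omega>) \<omega> \<partial>M)"
    by (rule real_cond_exp_intg(2)[OF i1 qF, symmetric]) (use iD in \<open>simp add: borel_measurable_integrable\<close>)
  also have "\<dots> = (\<integral>\<omega>. q (X \<omega>) * \<tau> (X \<omega>) \<partial>M)"
    by (rule integral_cong_AE) (use ae qM tM in auto)
  finally show "(\<integral>\<omega>. q (X \<omega>) * (Y1 \<omega> - Y0 \<omega>) \<partial>M) = (\<integral>\<omega>. q (X \<omega>) * \<tau> (X \<omega>) \<partial>M)" .
qed

lemma key3:
  fixes Z Y1 Y0 :: "'a \<Rightarrow> real"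
  assumes P: "prob_space M" and Xm: "X \<in> measurable M MX"
   and Y1: "integrable M Y1" and Y0: "integrable M Y0"
   and Zm: "Z \<in> borel_measurable M" and Zb: "\<And>\<omega>. \<omega> \<in> space M \<Longrightarrow> Z \<omega> \<in> {0,1}"
   and CI: "cond_indep M X MX borel (\<lambda>\<omega>. (Y1 \<omega>, Y0 \<omega>)) borel Z" and q: "cond_exp_fun M X MX Z q"
   and qb: "\<And>x. x \<in> space MX \<Longrightarrow> 0 < q x \<and> q x < 1"
   and tau: "cond_exp_fun M X MX (\<lambda>\<omega>. Y1 \<omega> - Y0 \<omega>) \<tau>"
  shows "(\<integral>\<omega>. Z \<omega> * (Y1 \<omega> - Y0 \<omega>) \<partial>M) = (\<integral>\<omega>. q (X \<omega>) * \<tau> (X \<omega>) \<partial>M)"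
proof -
  have qm: "q \<in> borel_measurable MX" using q unfolding cond_exp_fun_def by auto
  have Um: "(\<lambda>\<omega>. (Y1 \<omega>, Y0 \<omega>)) \<in> borel_measurable M"
    using Y1 Y0 by (simp add: borel_measurable_integrable)
  have hm: "(\<lambda>p. fst p - snd p :: real) \<in> borel_measurable borel" by (intro borel_measurable_continuous_onI continuous_intros)
  have qb': "\<And>x. x \<in> space MX \<Longrightarrow> 0 \<le> q x \<and> q x \<le> 1" using qb by (meson less_imp_le)
  have "(\<integral>\<omega>. Z \<omega> * (Y1 \<omega> - Y0 \<omega>) \<partial>M) = (\<integral>\<omega>. q (X \<omega>) * (Y1 \<omega> - Y0 \<omega>) \<partial>M)"
    using key2[OF P Xm Um Zm Zb CI q qb' hm] by simp
  also have "\<dots> = (\<integral>\<omega>. q (X \<omega>) * \<tau> (X \<omega>) \<partial>M)"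
    by (rule key4(1)[OF P Xm Y1 Y0 tau qm]) (use qb' in \<open>auto simp: abs_le_iff\<close>)
  finally show ?thesis .
qed

theorem mainTheorem3:
  fixes M :: "'a measure" and MX :: "'x measure"
    and X :: "'a \<Rightarrow> 'x" and r :: "'x \<Rightarrow> real"
    and A Sst Y1 Y0 :: "'a \<Rightarrow> real"
    and \<pi> \<pi>st \<rho>st \<tau> :: "'x \<Rightarrow> real"
  defines "Ast \<equiv> (\<lambda>\<omega>. Sst \<omega> * r (X \<omega>) + (1 - Sst \<omega>) * A \<omega>)"
  defines "Yst \<equiv> (\<lambda>\<omega>. Ast \<omega> * Y1 \<omega> + (1 - Ast \<omega>) * Y0 \<omega>)"
  defines "Ys0 \<equiv> (\<lambda>\<omega>. A \<omega> * Y1 \<omega> + (1 - A \<omega>) * Y0 \<omega>)"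
  defines "Ys1 \<equiv> (\<lambda>\<omega>. r (X \<omega>) * Y1 \<omega> + (1 - r (X \<omega>)) * Y0 \<omega>)"
  assumes "prob_space M"
    and X_meas: "X \<in> measurable M MX"
    and r_meas: "r \<in> borel_measurable MX"
    and r_bin: "\<And>x. x \<in> space MX \<Longrightarrow> r x \<in> {0, 1}"
    and A_meas: "A \<in> borel_measurable M"
    and A_bin: "\<And>\<omega>. \<omega> \<in> space M \<Longrightarrow> A \<omega> \<in> {0, 1}"
    and S_meas: "Sst \<in> borel_measurable M"
    and S_bin: "\<And>\<omega>. \<omega> \<in> space M \<Longrightarrow> Sst \<omega> \<in> {0, 1}"
    and Y1_int: "integrable M Y1"
    and Y0_int: "integrable M Y0"
    and CI1: "cond_indep M X MX borel (\<lambda>\<omega>. (Y1 \<omega>, Y0 \<omega>)) borel A"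
    and CI2: "cond_indep M X MX borel (\<lambda>\<omega>. (Y1 \<omega>, Y0 \<omega>)) borel Ast"
    and CI3: "cond_indep M X MX borel A borel Sst"
    and pi_def: "cond_exp_fun M X MX A \<pi>"
    and pist_def: "cond_exp_fun M X MX Ast \<pi>st"
    and rho_def: "cond_exp_fun M X MX Sst \<rho>st"
    and tau_def: "cond_exp_fun M X MX (\<lambda>\<omega>. Y1 \<omega> - Y0 \<omega>) \<tau>"
    and pi_pos: "\<And>x. x \<in> space MX \<Longrightarrow> 0 < \<pi> x \<and> \<pi> x < 1"
    and pist_pos: "\<And>x. x \<in> space MX \<Longrightarrow> 0 < \<pi>st x \<and> \<pi>st x < 1"
  shows "(\<integral>\<omega>. Yst \<omega> - Ys0 \<omega> \<partial>M) = (\<integral>\<omega>. (\<pi>st (X \<omega>) - \<pi> (X \<omega>)) * \<tau> (X \<omega>) \<partial>M)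
       \<and> (\<integral>\<omega>. Yst \<omega> - Ys0 \<omega> \<partial>M)
           = (\<integral>\<omega>. \<rho>st (X \<omega>) * (r (X \<omega>) - \<pi> (X \<omega>)) * \<tau> (X \<omega>) \<partial>M)
       \<and> (\<integral>\<omega>. Ys1 \<omega> - Yst \<omega> \<partial>M) = (\<integral>\<omega>. (r (X \<omega>) - \<pi>st (X \<omega>)) * \<tau> (X \<omega>) \<partial>M)
       \<and> (\<integral>\<omega>. Ys1 \<omega> - Yst \<omega> \<partial>M)
           = (\<integral>\<omega>. (1 - \<rho>st (X \<omega>)) * (r (X \<omega>) - \<pi> (X \<omega>)) * \<tau> (X \<omega>) \<partial>M)"
proof -
  note P = \<open>prob_space M\<close>
  interpret prob_space M by fact
  let ?F = "sigma_of M X MX"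
  let ?D = "\<lambda>\<omega>. Y1 \<omega> - Y0 \<omega>"
  interpret sigma_finite_subalgebra M ?F using sfs[OF P X_meas] .
  have Xsp: "\<And>\<omega>. \<omega> \<in> space M \<Longrightarrow> X \<omega> \<in> space MX" using measurable_space[OF X_meas] .
  have pim: "\<pi> \<in> borel_measurable MX" and ae_pi: "AE \<omega> in M. \<pi> (X \<omega>) = real_cond_exp M ?F A \<omega>"
    using pi_def unfolding cond_exp_fun_def by auto
  have pistm: "\<pi>st \<in> borel_measurable MX" and ae_pist: "AE \<omega> in M. \<pi>st (X \<omega>) = real_cond_exp M ?F Ast \<omega>"
    using pist_def unfolding cond_exp_fun_def by auto
  have rhom: "\<rho>st \<in> borel_measurable MX" and ae_rho: "AE \<omega> in M. \<rho>st (X \<omega>) = real_cond_exp M ?F Sst \<omega>"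
    using rho_def unfolding cond_exp_fun_def by auto
  have taum: "\<tau> \<in> borel_measurable MX"
    using tau_def unfolding cond_exp_fun_def by auto
  note [measurable] = X_meas r_meas A_meas S_meas pim pistm rhom taum
  have Y1m[measurable]: "Y1 \<in> borel_measurable M" using Y1_int by (simp add: borel_measurable_integrable)
  have Y0m[measurable]: "Y0 \<in> borel_measurable M" using Y0_int by (simp add: borel_measurable_integrable)
  have rXF: "(\<lambda>\<omega>. r (X \<omega>)) \<in> borel_measurable ?F" by (rule meas_F[OF X_meas r_meas])
  have Astm[measurable]: "Ast \<in> borel_measurable M" unfolding Ast_def by measurable
  have Ast_bin: "Ast \<omega> \<in> {0,1}" if w: "\<omega> \<in> space M" for \<omega>
  proof -
    have "Sst \<omega> \<in> {0,1}" "A \<omega> \<in> {0,1}" "r (X \<omega>) \<in> {0,1}" using S_bin A_bin r_bin Xsp w by auto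
    then show ?thesis unfolding Ast_def by auto
  qed
  have iD: "integrable M ?D" using Y1_int Y0_int by simp
  have b01: "\<bar>f \<omega>\<bar> \<le> 1" if "f \<omega> \<in> {0,1}" for f :: "'a \<Rightarrow> real" and \<omega> using that by auto
  have iAD: "integrable M (\<lambda>\<omega>. A \<omega> * ?D \<omega>)"
    by (rule intb[OF iD A_meas]) (use A_bin in \<open>auto intro!: AE_I2 b01\<close>)
  have iAstD: "integrable M (\<lambda>\<omega>. Ast \<omega> * ?D \<omega>)"
    by (rule intb[OF iD Astm]) (use Ast_bin in \<open>auto intro!: AE_I2 b01\<close>)
  have rb: "\<And>x. x \<in> space MX \<Longrightarrow> \<bar>r x\<bar> \<le> 1" using r_bin by (auto intro: b01)
  have pib: "\<And>x. x \<in> space MX \<Longrightarrow> \<bar>\<pi> x\<bar> \<le> 1" by (auto simp: abs_le_iff dest!: pi_pos)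
  have pistb: "\<And>x. x \<in> space MX \<Longrightarrow> \<bar>\<pi>st x\<bar> \<le> 1" by (auto simp: abs_le_iff dest!: pist_pos)
  note k4r = key4[OF P X_meas Y1_int Y0_int tau_def r_meas rb]
  note k4pi = key4[OF P X_meas Y1_int Y0_int tau_def pim pib]
  note k4pist = key4[OF P X_meas Y1_int Y0_int tau_def pistm pistb]
  have eA: "(\<integral>\<omega>. A \<omega> * ?D \<omega> \<partial>M) = (\<integral>\<omega>. \<pi> (X \<omega>) * \<tau> (X \<omega>) \<partial>M)"
    by (rule key3[OF P X_meas Y1_int Y0_int A_meas A_bin CI1 pi_def pi_pos tau_def])
  have eAst: "(\<integral>\<omega>. Ast \<omega> * ?D \<omega> \<partial>M) = (\<integral>\<omega>. \<pi>st (X \<omega>) * \<tau> (X \<omega>) \<partial>M)"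
    by (rule key3[OF P X_meas Y1_int Y0_int Astm Ast_bin CI2 pist_def pist_pos tau_def])
  have L: "(\<integral>\<omega>. Yst \<omega> - Ys0 \<omega> \<partial>M) = (\<integral>\<omega>. (\<pi>st (X \<omega>) - \<pi> (X \<omega>)) * \<tau> (X \<omega>) \<partial>M)"
  proof -
    have "(\<integral>\<omega>. Yst \<omega> - Ys0 \<omega> \<partial>M) = (\<integral>\<omega>. Ast \<omega> * ?D \<omega> - A \<omega> * ?D \<omega> \<partial>M)"
      by (rule Bochner_Integration.integral_cong[OF refl]) (simp add: Yst_def Ys0_def algebra_simps)
    also have "\<dots> = (\<integral>\<omega>. \<pi>st (X \<omega>) * \<tau> (X \<omega>) \<partial>M) - (\<integral>\<omega>. \<pi> (X \<omega>) * \<tau> (X \<omega>) \<partial>M)"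
      using iAD iAstD eA eAst by simp
    also have "\<dots> = (\<integral>\<omega>. \<pi>st (X \<omega>) * \<tau> (X \<omega>) - \<pi> (X \<omega>) * \<tau> (X \<omega>) \<partial>M)"
      using k4pi(2) k4pist(2) by simp
    also have "\<dots> = (\<integral>\<omega>. (\<pi>st (X \<omega>) - \<pi> (X \<omega>)) * \<tau> (X \<omega>) \<partial>M)"
      by (simp add: algebra_simps)
    finally show ?thesis .
  qed
  have G: "(\<integral>\<omega>. Ys1 \<omega> - Yst \<omega> \<partial>M) = (\<integral>\<omega>. (r (X \<omega>) - \<pi>st (X \<omega>)) * \<tau> (X \<omega>) \<partial>M)"
  proof -
    have "(\<integral>\<omega>. Ys1 \<omega> - Yst \<omega> \<partial>M) = (\<integral>\<omega>. r (X \<omega>) * ?D \<omega> - Ast \<omega> * ?D \<omega> \<partial>M)"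
      by (rule Bochner_Integration.integral_cong[OF refl]) (simp add: Yst_def Ys1_def algebra_simps)
    also have "\<dots> = (\<integral>\<omega>. r (X \<omega>) * \<tau> (X \<omega>) \<partial>M) - (\<integral>\<omega>. \<pi>st (X \<omega>) * \<tau> (X \<omega>) \<partial>M)"
      using k4r(3) iAstD k4r(1) eAst by simp
    also have "\<dots> = (\<integral>\<omega>. r (X \<omega>) * \<tau> (X \<omega>) - \<pi>st (X \<omega>) * \<tau> (X \<omega>) \<partial>M)"
      using k4r(2) k4pist(2) by simp
    also have "\<dots> = (\<integral>\<omega>. (r (X \<omega>) - \<pi>st (X \<omega>)) * \<tau> (X \<omega>) \<partial>M)"
      by (simp add: algebra_simps)
    finally show ?thesis .
  qed
  let ?IA = "\<lambda>\<omega>. indicator {1::real} (A \<omega>) :: real"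
  let ?IS = "\<lambda>\<omega>. indicator {1::real} (Sst \<omega>) :: real"
  let ?f = "\<lambda>\<omega>. r (X \<omega>) * Sst \<omega>"
  let ?g = "\<lambda>\<omega>. A \<omega> - ?IA \<omega> * ?IS \<omega>"
  have bins: "Sst \<omega> \<in> {0,1} \<and> A \<omega> \<in> {0,1} \<and> r (X \<omega>) \<in> {0,1}" if "\<omega> \<in> space M" for \<omega>
    using S_bin A_bin r_bin Xsp that by auto
  have fm[measurable]: "?f \<in> borel_measurable M" by measurable
  have gm[measurable]: "?g \<in> borel_measurable M" by measurable
  have if_: "integrable M ?f"
    by (rule int01[OF P fm]) (auto dest!: bins)
  have ig: "integrable M ?g"
    by (rule int01[OF P gm]) (auto dest!: bins split: split_indicator)
  have iA: "integrable M A" by (rule int01[OF P A_meas A_bin])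
  have iS: "integrable M Sst" by (rule int01[OF P S_meas S_bin])
  have iAS: "integrable M (\<lambda>\<omega>. ?IA \<omega> * ?IS \<omega>)"
    by (rule int01[OF P]) (measurable, auto dest!: bins split: split_indicator)
  have s1: "AE \<omega> in M. real_cond_exp M ?F Ast \<omega> = real_cond_exp M ?F (\<lambda>\<omega>. ?f \<omega> + ?g \<omega>) \<omega>"
    by (rule real_cond_exp_cong) (auto dest!: bins intro!: AE_I2 simp: Ast_def split: split_indicator)
  have s2: "AE \<omega> in M. real_cond_exp M ?F (\<lambda>\<omega>. ?f \<omega> + ?g \<omega>) \<omega> = real_cond_exp M ?F ?f \<omega> + real_cond_exp M ?F ?g \<omega>"
    by (rule real_cond_exp_add[OF if_ ig])
  have s3: "AE \<omega> in M. real_cond_exp M ?F ?f \<omega> = r (X \<omega>) * real_cond_exp M ?F Sst \<omega>"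
    by (rule real_cond_exp_mult[OF rXF S_meas if_])
  have s4: "AE \<omega> in M. real_cond_exp M ?F ?g \<omega> = real_cond_exp M ?F A \<omega> - real_cond_exp M ?F (\<lambda>\<omega>. ?IA \<omega> * ?IS \<omega>) \<omega>"
    by (rule real_cond_exp_diff[OF iA iAS])
  have s5: "AE \<omega> in M. real_cond_exp M ?F (\<lambda>\<omega>. ?IA \<omega> * ?IS \<omega>) \<omega> = real_cond_exp M ?F ?IA \<omega> * real_cond_exp M ?F ?IS \<omega>"
    using CI3 unfolding cond_indep_def by auto
  have s6: "AE \<omega> in M. real_cond_exp M ?F ?IA \<omega> = real_cond_exp M ?F A \<omega>"
    by (rule real_cond_exp_cong) (auto dest!: bins intro!: AE_I2 split: split_indicator)
  have s7: "AE \<omega> in M. real_cond_exp M ?F ?IS \<omega> = real_cond_exp M ?F Sst \<omega>"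
    by (rule real_cond_exp_cong) (auto dest!: bins intro!: AE_I2 split: split_indicator)
  have key: "AE \<omega> in M. \<pi>st (X \<omega>) = r (X \<omega>) * \<rho>st (X \<omega>) + \<pi> (X \<omega>) - \<pi> (X \<omega>) * \<rho>st (X \<omega>)"
    using s1 s2 s3 s4 s5 s6 s7 ae_pi ae_pist ae_rho by eventually_elim simp
  have piX: "(\<lambda>\<omega>. \<pi> (X \<omega>)) \<in> borel_measurable M" by (rule measurable_compose[OF X_meas pim])
  have pistX: "(\<lambda>\<omega>. \<pi>st (X \<omega>)) \<in> borel_measurable M" by (rule measurable_compose[OF X_meas pistm])
  have rhoX: "(\<lambda>\<omega>. \<rho>st (X \<omega>)) \<in> borel_measurable M" by (rule measurable_compose[OF X_meas rhom])
  have rX: "(\<lambda>\<omega>. r (X \<omega>)) \<in> borel_measurable M" by (rule measurable_compose[OF X_meas r_meas])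
  have tauX: "(\<lambda>\<omega>. \<tau> (X \<omega>)) \<in> borel_measurable M" by (rule measurable_compose[OF X_meas taum])
  have aeL: "AE \<omega> in M. (\<pi>st (X \<omega>) - \<pi> (X \<omega>)) * \<tau> (X \<omega>) = \<rho>st (X \<omega>) * (r (X \<omega>) - \<pi> (X \<omega>)) * \<tau> (X \<omega>)"
    using key by eventually_elim (erule ssubst, simp add: algebra_simps)
  have aeG: "AE \<omega> in M. (r (X \<omega>) - \<pi>st (X \<omega>)) * \<tau> (X \<omega>) = (1 - \<rho>st (X \<omega>)) * (r (X \<omega>) - \<pi> (X \<omega>)) * \<tau> (X \<omega>)"
    using key by eventually_elim (erule ssubst, simp add: algebra_simps)
  have L2: "(\<integral>\<omega>. (\<pi>st (X \<omega>) - \<pi> (X \<omega>)) * \<tau> (X \<omega>) \<partial>M)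
      = (\<integral>\<omega>. \<rho>st (X \<omega>) * (r (X \<omega>) - \<pi> (X \<omega>)) * \<tau> (X \<omega>) \<partial>M)"
    by (rule integral_cong_AE[OF _ _ aeL])
      (auto intro!: borel_measurable_times borel_measurable_diff piX pistX rhoX rX tauX)
  have G2: "(\<integral>\<omega>. (r (X \<omega>) - \<pi>st (X \<omega>)) * \<tau> (X \<omega>) \<partial>M)
      = (\<integral>\<omega>. (1 - \<rho>st (X \<omega>)) * (r (X \<omega>) - \<pi> (X \<omega>)) * \<tau> (X \<omega>) \<partial>M)"
    by (rule integral_cong_AE[OF _ _ aeG])
      (auto intro!: borel_measurable_times borel_measurable_diff piX pistX rhoX rX tauX)
  show ?thesis by (simp only: L L2 G G2)
qed

end
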